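(* Let $\tilde L$ be a minimum-size counterexample. Then there is a join-irreducible element $j$ of $\tilde L$ that is less than or equal to more than half of the meet-irreducible elements of $\tilde L$.
   Context: For a poset $P$, $x$ upper covers $y$ (and $y$ lower covers $x$) if $y<x$ with nothing strictly between. Join-irreducible: upper covers exactly one element; meet-irreducible: lower covers exactly one element. For $x\in P$, ${\uparrow}x=\{y: x\le y\}$. A counterexample is a finite lattice $L$ with $|L|>1$ in which every join-irreducible $j$ satisfies $|{\uparrow}j|>|L|/2$; a minimum-size counterexample is a counterexample $\tilde L$ such that no counterexample has fewer elements. *)

theory Defs
  imports Complex_Main "HOL-Algebra.Lattice"
begin

text \<open>Lattices are HOL-Algebra gorder records L satisfying the locale predicate
  lattice L (a partial order on carrier L, with equality as its equivalence,
  having binary joins and meets).\<close>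

definition upper_covers :: "('a, 'b) gorder_scheme \<Rightarrow> 'a \<Rightarrow> 'a \<Rightarrow> bool" where
  "upper_covers L x y \<longleftrightarrow> x \<in> carrier L \<and> y \<in> carrier L \<and> y \<sqsubset>\<^bsub>L\<^esub> x \<and>
     \<not> (\<exists>z\<in>carrier L. y \<sqsubset>\<^bsub>L\<^esub> z \<and> z \<sqsubset>\<^bsub>L\<^esub> x)"

definition join_irreducible :: "('a, 'b) gorder_scheme \<Rightarrow> 'a \<Rightarrow> bool" where
  "join_irreducible L j \<longleftrightarrow> j \<in> carrier L \<and> (\<exists>!y. upper_covers L j y)"

definition meet_irreducible :: "('a, 'b) gorder_scheme \<Rightarrow> 'a \<Rightarrow> bool" where
  "meet_irreducible L m \<longleftrightarrow> m \<in> carrier L \<and> (\<exists>!x. upper_covers L x m)"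

definition up_set :: "('a, 'b) gorder_scheme \<Rightarrow> 'a \<Rightarrow> 'a set" where
  "up_set L x = {y \<in> carrier L. x \<sqsubseteq>\<^bsub>L\<^esub> y}"

definition counterexample :: "('a, 'b) gorder_scheme \<Rightarrow> bool" where
  "counterexample L \<longleftrightarrow> lattice L \<and> finite (carrier L) \<and> card (carrier L) > 1 \<and>
     (\<forall>j. join_irreducible L j \<longrightarrow> real (card (up_set L j)) > real (card (carrier L)) / 2)"

text \<open>Every finite
  lattice is isomorphic to one whose carrier is a set of naturals, so quantifying over
  lattices on nat ranges over all finite lattices up to isomorphism.\<close>
definition min_counterexample :: "('a, 'b) gorder_scheme \<Rightarrow> bool" where
  "min_counterexample L \<longleftrightarrow> counterexample L \<and>
     \<not> (\<exists>L' :: nat gorder. counterexample L' \<and> card (carrier L') < card (carrier L))"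

end

theory Submission
  imports Defs
begin

lemma (in partial_order) finite_minimal:
  assumes "finite A" "A \<subseteq> carrier L" "A \<noteq> {}"
  shows "\<exists>m\<in>A. \<forall>y\<in>A. \<not> y \<sqsubset> m"
  using assms(1,3,2)
proof (induction A rule: finite_ne_induct)
  case (singleton x)
  then show ?case by (auto simp: lless_eq)
next
  case (insert a A)
  then obtain m where m: "m \<in> A" "\<forall>y\<in>A. \<not> y \<sqsubset> m" by auto
  show ?case
  proof (cases "a \<sqsubset> m")
    case True
    have "\<forall>y\<in>insert a A. \<not> y \<sqsubset> a"
    proof
      fix y assume y: "y \<in> insert a A"
      show "\<not> y \<sqsubset> a"
      proof
        assume ya: "y \<sqsubset> a"
        then have "y \<noteq> a" by (simp add: lless_eq)
        with y have "y \<in> A" by auto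
        have "y \<sqsubset> m" using lless_trans[OF ya True] insert m \<open>y\<in>A\<close> by auto
        with m \<open>y\<in>A\<close> show False by auto
      qed
    qed
    then show ?thesis by auto
  next
    case False
    then show ?thesis using m by auto
  qed
qed

lemma (in partial_order) finite_maximal:
  assumes "finite A" "A \<subseteq> carrier L" "A \<noteq> {}"
  shows "\<exists>m\<in>A. \<forall>y\<in>A. \<not> m \<sqsubset> y"
  using assms(1,3,2)
proof (induction A rule: finite_ne_induct)
  case (singleton x)
  then show ?case by (auto simp: lless_eq)
next
  case (insert a A)
  then obtain m where m: "m \<in> A" "\<forall>y\<in>A. \<not> m \<sqsubset> y" by auto
  show ?case
  proof (cases "m \<sqsubset> a")
    case True
    have "\<forall>y\<in>insert a A. \<not> a \<sqsubset> y"
    proof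
      fix y assume y: "y \<in> insert a A"
      show "\<not> a \<sqsubset> y"
      proof
        assume ya: "a \<sqsubset> y"
        then have "y \<noteq> a" by (auto simp add: lless_eq)
        with y have "y \<in> A" by auto
        have "m \<sqsubset> y" using lless_trans[OF True ya] insert m \<open>y\<in>A\<close> by auto
        with m \<open>y\<in>A\<close> show False by auto
      qed
    qed
    then show ?thesis by auto
  next
    case False
    then show ?thesis using m by auto
  qed
qed

lemma (in partial_order) cover_above:
  assumes "finite (carrier L)" "x \<in> carrier L" "y \<in> carrier L" "x \<sqsubset> y"
  shows "\<exists>z. upper_covers L z x \<and> z \<sqsubseteq> y"
proof -
  let ?A = "{z \<in> carrier L. x \<sqsubset> z \<and> z \<sqsubseteq> y}"
  have "y \<in> ?A" using assms by auto
  then obtain z where z: "z \<in> ?A" "\<forall>w\<in>?A. \<not> w \<sqsubset> z"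
    using finite_minimal[of ?A] assms(1) by (metis (no_types, lifting) empty_iff mem_Collect_eq rev_finite_subset subsetI)
  have "upper_covers L z x"
    unfolding upper_covers_def
  proof (intro conjI)
    show "\<not> (\<exists>w\<in>carrier L. x \<sqsubset> w \<and> w \<sqsubset> z)"
    proof
      assume "\<exists>w\<in>carrier L. x \<sqsubset> w \<and> w \<sqsubset> z"
      then obtain w where w: "w \<in> carrier L" "x \<sqsubset> w" "w \<sqsubset> z" by auto
      have "w \<sqsubseteq> y" using w z assms le_trans[of w z y] by (auto simp: lless_eq)
      with w z show False by auto
    qed
  qed (use z assms in auto)
  then show ?thesis using z by auto
qed

lemma (in partial_order) cover_below:
  assumes "finite (carrier L)" "x \<in> carrier L" "y \<in> carrier L" "x \<sqsubset> y"
  shows "\<exists>z. upper_covers L y z \<and> x \<sqsubseteq> z"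
proof -
  let ?A = "{z \<in> carrier L. x \<sqsubseteq> z \<and> z \<sqsubset> y}"
  have "x \<in> ?A" using assms by auto
  then obtain z where z: "z \<in> ?A" "\<forall>w\<in>?A. \<not> z \<sqsubset> w"
    using finite_maximal[of ?A] assms(1) by (metis (no_types, lifting) empty_iff mem_Collect_eq rev_finite_subset subsetI)
  have "upper_covers L y z"
    unfolding upper_covers_def
  proof (intro conjI)
    show "\<not> (\<exists>w\<in>carrier L. z \<sqsubset> w \<and> w \<sqsubset> y)"
    proof
      assume "\<exists>w\<in>carrier L. z \<sqsubset> w \<and> w \<sqsubset> y"
      then obtain w where w: "w \<in> carrier L" "z \<sqsubset> w" "w \<sqsubset> y" by auto
      have "x \<sqsubseteq> w" using w z assms le_trans[of x z w] by (auto simp: lless_eq)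
      with w z show False by auto
    qed
  qed (use z assms in auto)
  then show ?thesis using z by auto
qed

lemma latticeI':
  fixes B :: "'b gorder"
  assumes eq: "eq B = (=)"
    and refl: "\<And>x. x \<in> carrier B \<Longrightarrow> x \<sqsubseteq>\<^bsub>B\<^esub> x"
    and antisym: "\<And>x y. x \<in> carrier B \<Longrightarrow> y \<in> carrier B \<Longrightarrow> x \<sqsubseteq>\<^bsub>B\<^esub> y \<Longrightarrow> y \<sqsubseteq>\<^bsub>B\<^esub> x \<Longrightarrow> x = y"
    and trans: "\<And>x y z. x \<in> carrier B \<Longrightarrow> y \<in> carrier B \<Longrightarrow> z \<in> carrier B \<Longrightarrow> x \<sqsubseteq>\<^bsub>B\<^esub> y \<Longrightarrow> y \<sqsubseteq>\<^bsub>B\<^esub> z \<Longrightarrow> x \<sqsubseteq>\<^bsub>B\<^esub> z"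
    and sup: "\<And>x y. x \<in> carrier B \<Longrightarrow> y \<in> carrier B \<Longrightarrow> \<exists>s\<in>carrier B. x \<sqsubseteq>\<^bsub>B\<^esub> s \<and> y \<sqsubseteq>\<^bsub>B\<^esub> s \<and> (\<forall>u\<in>carrier B. x \<sqsubseteq>\<^bsub>B\<^esub> u \<longrightarrow> y \<sqsubseteq>\<^bsub>B\<^esub> u \<longrightarrow> s \<sqsubseteq>\<^bsub>B\<^esub> u)"
    and inf: "\<And>x y. x \<in> carrier B \<Longrightarrow> y \<in> carrier B \<Longrightarrow> \<exists>s\<in>carrier B. s \<sqsubseteq>\<^bsub>B\<^esub> x \<and> s \<sqsubseteq>\<^bsub>B\<^esub> y \<and> (\<forall>u\<in>carrier B. u \<sqsubseteq>\<^bsub>B\<^esub> x \<longrightarrow> u \<sqsubseteq>\<^bsub>B\<^esub> y \<longrightarrow> u \<sqsubseteq>\<^bsub>B\<^esub> s)"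
  shows "lattice B"
proof -
  have po: "partial_order B"
    by (unfold_locales) (auto simp: eq intro: refl antisym trans)
  show ?thesis
  proof (intro lattice.intro upper_semilattice.intro lower_semilattice.intro po
      upper_semilattice_axioms.intro lower_semilattice_axioms.intro)
    fix x y assume xy: "x \<in> carrier B" "y \<in> carrier B"
    from sup[OF this] obtain s where "s \<in> carrier B" "x \<sqsubseteq>\<^bsub>B\<^esub> s" "y \<sqsubseteq>\<^bsub>B\<^esub> s"
      "\<forall>u\<in>carrier B. x \<sqsubseteq>\<^bsub>B\<^esub> u \<longrightarrow> y \<sqsubseteq>\<^bsub>B\<^esub> u \<longrightarrow> s \<sqsubseteq>\<^bsub>B\<^esub> u" by blast
    then show "\<exists>s. least B s (Upper B {x, y})"
      by (intro exI[of _ s]) (use xy in \<open>auto simp: least_def Upper_def\<close>)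
  next
    fix x y assume xy: "x \<in> carrier B" "y \<in> carrier B"
    from inf[OF this] obtain s where "s \<in> carrier B" "s \<sqsubseteq>\<^bsub>B\<^esub> x" "s \<sqsubseteq>\<^bsub>B\<^esub> y"
      "\<forall>u\<in>carrier B. u \<sqsubseteq>\<^bsub>B\<^esub> x \<longrightarrow> u \<sqsubseteq>\<^bsub>B\<^esub> y \<longrightarrow> u \<sqsubseteq>\<^bsub>B\<^esub> s" by blast
    then show "\<exists>s. greatest B s (Lower B {x, y})"
      by (intro exI[of _ s]) (use xy in \<open>auto simp: greatest_def Lower_def\<close>)
  qed
qed

lemma transport_nat:
  fixes A :: "'a gorder"
  assumes ce: "counterexample A"
  shows "\<exists>B :: nat gorder. counterexample B \<and> card (carrier B) = card (carrier A)"
proof -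
  from ce have lat: "lattice A" and fin: "finite (carrier A)" and c1: "card (carrier A) > 1"
    and big: "\<forall>j. join_irreducible A j \<longrightarrow> real (card (up_set A j)) > real (card (carrier A)) / 2"
    by (auto simp: counterexample_def)
  interpret lattice A by (rule lat)
  define k where "k = card (carrier A)"
  obtain h where bij: "bij_betw h {0..<k} (carrier A)"
    using ex_bij_betw_nat_finite[OF fin] unfolding k_def by blast
  define C where "C = {0..<k}"
  have inj: "inj_on h C" and img: "h ` C = carrier A" using bij by (auto simp: bij_betw_def C_def)
  have hC: "\<And>x. x \<in> C \<Longrightarrow> h x \<in> carrier A" using img by auto
  define g where "g = inv_into C h"
  have gC: "\<And>a. a \<in> carrier A \<Longrightarrow> g a \<in> C" unfolding g_def using img by (metis inv_into_into)
  have hg: "\<And>a. a \<in> carrier A \<Longrightarrow> h (g a) = a" unfolding g_def using img by (metis f_inv_into_f)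
  have heq: "\<And>x y. x \<in> C \<Longrightarrow> y \<in> C \<Longrightarrow> h x = h y \<longleftrightarrow> x = y" using inj by (auto dest: inj_onD)
  define B :: "nat gorder" where "B = \<lparr>carrier = C, eq = (=), le = (\<lambda>x y. h x \<sqsubseteq>\<^bsub>A\<^esub> h y)\<rparr>"
  have [simp]: "carrier B = C" "eq B = (=)" "\<And>x y. x \<sqsubseteq>\<^bsub>B\<^esub> y \<longleftrightarrow> h x \<sqsubseteq>\<^bsub>A\<^esub> h y"
    by (auto simp: B_def)
  have latB: "lattice B"
  proof (rule latticeI')
    fix x y assume xy: "x \<in> carrier B" "y \<in> carrier B"
    then have hx: "h x \<in> carrier A" "h y \<in> carrier A" using hC by auto
    show "\<exists>s\<in>carrier B. x \<sqsubseteq>\<^bsub>B\<^esub> s \<and> y \<sqsubseteq>\<^bsub>B\<^esub> s \<and> (\<forall>u\<in>carrier B. x \<sqsubseteq>\<^bsub>B\<^esub> u \<longrightarrow> y \<sqsubseteq>\<^bsub>B\<^esub> u \<longrightarrow> s \<sqsubseteq>\<^bsub>B\<^esub> u)"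
      using hx gC hg hC join_left join_right join_le join_closed
      by (intro bexI[of _ "g (h x \<squnion>\<^bsub>A\<^esub> h y)"]) auto
    show "\<exists>s\<in>carrier B. s \<sqsubseteq>\<^bsub>B\<^esub> x \<and> s \<sqsubseteq>\<^bsub>B\<^esub> y \<and> (\<forall>u\<in>carrier B. u \<sqsubseteq>\<^bsub>B\<^esub> x \<longrightarrow> u \<sqsubseteq>\<^bsub>B\<^esub> y \<longrightarrow> u \<sqsubseteq>\<^bsub>B\<^esub> s)"
      using hx gC hg hC meet_left meet_right meet_le meet_closed
      by (intro bexI[of _ "g (h x \<sqinter>\<^bsub>A\<^esub> h y)"]) auto
  next
    fix x y assume "x \<in> carrier B" "y \<in> carrier B" "x \<sqsubseteq>\<^bsub>B\<^esub> y" "y \<sqsubseteq>\<^bsub>B\<^esub> x"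
    then show "x = y" using hC heq le_antisym by (metis \<open>x \<in> carrier B\<close> \<open>y \<in> carrier B\<close> \<open>x \<sqsubseteq>\<^bsub>B\<^esub> y\<close> \<open>y \<sqsubseteq>\<^bsub>B\<^esub> x\<close> B_def gorder.select_convs(1) partial_object.select_convs(1))
  next
    fix x y z assume "x \<in> carrier B" "y \<in> carrier B" "z \<in> carrier B" "x \<sqsubseteq>\<^bsub>B\<^esub> y" "y \<sqsubseteq>\<^bsub>B\<^esub> z"
    then show "x \<sqsubseteq>\<^bsub>B\<^esub> z" using hC le_trans by auto
  qed (use hC in auto)
  have lessB: "\<And>x y. x \<in> C \<Longrightarrow> y \<in> C \<Longrightarrow> x \<sqsubset>\<^bsub>B\<^esub> y \<longleftrightarrow> h x \<sqsubset>\<^bsub>A\<^esub> h y"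
    using heq by (auto simp: lless_def eq_is_equal)
  have ucB: "\<And>x y. upper_covers B x y \<longleftrightarrow> x \<in> C \<and> y \<in> C \<and> upper_covers A (h x) (h y)"
  proof -
    fix x y
    show "upper_covers B x y \<longleftrightarrow> x \<in> C \<and> y \<in> C \<and> upper_covers A (h x) (h y)"
    proof
      assume u: "upper_covers B x y"
      then have xy: "x \<in> C" "y \<in> C" by (auto simp: upper_covers_def)
      show "x \<in> C \<and> y \<in> C \<and> upper_covers A (h x) (h y)"
        unfolding upper_covers_def
      proof (intro conjI xy hC)
        show "h y \<sqsubset>\<^bsub>A\<^esub> h x" using u xy lessB by (auto simp: upper_covers_def)
        show "\<not> (\<exists>z\<in>carrier A. h y \<sqsubset>\<^bsub>A\<^esub> z \<and> z \<sqsubset>\<^bsub>A\<^esub> h x)"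
        proof
          assume "\<exists>z\<in>carrier A. h y \<sqsubset>\<^bsub>A\<^esub> z \<and> z \<sqsubset>\<^bsub>A\<^esub> h x"
          then obtain z where z: "z \<in> carrier A" "h y \<sqsubset>\<^bsub>A\<^esub> z" "z \<sqsubset>\<^bsub>A\<^esub> h x" by auto
          then have "y \<sqsubset>\<^bsub>B\<^esub> g z" "g z \<sqsubset>\<^bsub>B\<^esub> x" using lessB xy gC hg by auto
          with u gC z(1) show False by (auto simp: upper_covers_def)
        qed
      qed
    next
      assume r: "x \<in> C \<and> y \<in> C \<and> upper_covers A (h x) (h y)"
      show "upper_covers B x y" unfolding upper_covers_def
      proof (intro conjI)
        show "\<not> (\<exists>z\<in>carrier B. y \<sqsubset>\<^bsub>B\<^esub> z \<and> z \<sqsubset>\<^bsub>B\<^esub> x)"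
          using r lessB hC by (auto simp: upper_covers_def)
      qed (use r lessB in \<open>auto simp: upper_covers_def\<close>)
    qed
  qed
  have jiB: "\<And>x. join_irreducible B x \<Longrightarrow> join_irreducible A (h x) \<and> x \<in> C"
  proof -
    fix x assume ji: "join_irreducible B x"
    then have xC: "x \<in> C" by (auto simp: join_irreducible_def)
    from ji obtain y where y: "upper_covers B x y" and yu: "\<And>y'. upper_covers B x y' \<Longrightarrow> y' = y"
      by (auto simp: join_irreducible_def)
    have "\<exists>!y'. upper_covers A (h x) y'"
    proof (rule ex1I[of _ "h y"])
      show "upper_covers A (h x) (h y)" using y ucB by auto
      fix y' assume y': "upper_covers A (h x) y'"
      then have "y' \<in> carrier A" by (auto simp: upper_covers_def)
      then have "upper_covers B x (g y')" using ucB xC gC hg y' by auto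
      then have "g y' = y" using yu by auto
      then show "y' = h y" using hg \<open>y' \<in> carrier A\<close> by metis
    qed
    then show "join_irreducible A (h x) \<and> x \<in> C" using xC hC by (auto simp: join_irreducible_def)
  qed
  have upB: "\<And>x. x \<in> C \<Longrightarrow> card (up_set B x) = card (up_set A (h x))"
  proof -
    fix x assume xC: "x \<in> C"
    have "h ` up_set B x = up_set A (h x)"
    proof
      show "h ` up_set B x \<subseteq> up_set A (h x)" using hC by (auto simp: up_set_def)
      show "up_set A (h x) \<subseteq> h ` up_set B x"
      proof
        fix a assume "a \<in> up_set A (h x)"
        then have "a \<in> carrier A" "h x \<sqsubseteq>\<^bsub>A\<^esub> a" by (auto simp: up_set_def)
        then show "a \<in> h ` up_set B x" using gC hg by (intro image_eqI[of _ _ "g a"]) (auto simp: up_set_def)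
      qed
    qed
    moreover have "inj_on h (up_set B x)" using inj by (rule inj_on_subset) (auto simp: up_set_def)
    ultimately show "card (up_set B x) = card (up_set A (h x))" by (metis card_image)
  qed
  have cardB: "card (carrier B) = card (carrier A)" by (simp add: C_def k_def)
  have "counterexample B"
    unfolding counterexample_def
  proof (intro conjI latB allI impI)
    show "finite (carrier B)" by (simp add: C_def)
    show "1 < card (carrier B)" using cardB c1 by simp
    fix j assume "join_irreducible B j"
    then have "join_irreducible A (h j)" "j \<in> C" using jiB by auto
    then show "real (card (carrier B)) / 2 < real (card (up_set B j))"
      using big upB cardB by auto
  qed
  then show ?thesis using cardB by blast
qed

lemma (in lattice) mi_meet:
  assumes fin: "finite (carrier L)" and mi: "meet_irreducible L m"
    and x: "x \<in> carrier L" and y: "y \<in> carrier L" and mx: "m \<sqsubset> x" and my: "m \<sqsubset> y"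
  shows "m \<sqsubset> x \<sqinter> y"
proof -
  have m: "m \<in> carrier L" using mi by (auto simp: meet_irreducible_def)
  obtain u1 where u1: "upper_covers L u1 m" "u1 \<sqsubseteq> x" using cover_above[OF fin m x mx] by auto
  obtain u2 where u2: "upper_covers L u2 m" "u2 \<sqsubseteq> y" using cover_above[OF fin m y my] by auto
  have "u1 = u2" using mi u1 u2 by (auto simp: meet_irreducible_def)
  have u1C: "u1 \<in> carrier L" using u1 by (auto simp: upper_covers_def)
  have "u1 \<sqsubseteq> x \<sqinter> y" using u1 u2 \<open>u1 = u2\<close> meet_le u1C x y by auto
  moreover have "m \<sqsubset> u1" using u1 by (auto simp: upper_covers_def)
  moreover have "m \<sqsubseteq> x \<sqinter> y" using mx my meet_le m x y by (auto simp: lless_eq)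
  ultimately show ?thesis using le_trans[of m u1 "x \<sqinter> y"] m u1C x y meet_closed
    by (auto simp: lless_eq)
qed

lemma (in lattice) main:
  assumes "min_counterexample L"
  shows "\<exists>j. join_irreducible L j \<and>
    real (card {m. meet_irreducible L m \<and> j \<sqsubseteq>\<^bsub>L\<^esub> m})
      > real (card {m. meet_irreducible L m}) / 2"
proof (rule ccontr)
  assume neg0: "\<not> ?thesis"
  have neg: "\<And>j. join_irreducible L j \<Longrightarrow>
      real (card {m. meet_irreducible L m \<and> j \<sqsubseteq>\<^bsub>L\<^esub> m}) \<le> real (card {m. meet_irreducible L m}) / 2"
    using neg0 by (auto simp: not_less)
  from assms have ce: "counterexample L"
    and nosmall: "\<not> (\<exists>L' :: nat gorder. counterexample L' \<and> card (carrier L') < card (carrier L))"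
    by (auto simp: min_counterexample_def)
  from ce have lat: "lattice L" and fin: "finite (carrier L)" and c1: "card (carrier L) > 1"
    and big: "\<And>j. join_irreducible L j \<Longrightarrow> real (card (up_set L j)) > real (card (carrier L)) / 2"
    by (auto simp: counterexample_def)
  define C where "C = carrier L"
  define M where "M = {m. meet_irreducible L m}"
  define K where "K = C - M"
  have MC: "M \<subseteq> C" by (auto simp: M_def C_def meet_irreducible_def)
  have finM: "finite M" using MC fin C_def finite_subset by auto
  have finK: "finite K" using fin by (auto simp: K_def C_def)
  have "C \<noteq> {}" using c1 by (auto simp: C_def)
  then obtain t where t: "t \<in> C" "\<forall>y\<in>C. \<not> t \<sqsubset> y" using finite_maximal[of C] fin by (auto simp: C_def)
  have tC: "t \<in> carrier L" using t by (simp add: C_def)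
  have top: "\<And>x. x \<in> carrier L \<Longrightarrow> x \<sqsubseteq> t"
  proof -
    fix x assume x: "x \<in> carrier L"
    have "t \<sqsubseteq> x \<squnion> t" using join_right x tC by auto
    moreover have "\<not> t \<sqsubset> x \<squnion> t" using t x tC by (auto simp: C_def)
    ultimately have "x \<squnion> t = t" by (auto simp: lless_eq)
    then show "x \<sqsubseteq> t" using join_left x tC by metis
  qed
  have tK: "t \<in> K"
  proof -
    have "\<not> upper_covers L x t" for x using top by (auto simp: upper_covers_def lless_eq intro: le_antisym)
    then show ?thesis using t by (auto simp: K_def M_def meet_irreducible_def)
  qed
  have "\<not> C \<subseteq> {t}"
  proof
    assume "C \<subseteq> {t}"
    then have "card C \<le> 1" using card_mono[of "{t}" C] by auto
    then show False using c1 by (simp add: C_def)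
  qed
  then obtain x0 where x0: "x0 \<in> C" "x0 \<noteq> t" by auto
  then have "x0 \<sqsubset> t" using top by (auto simp: lless_eq C_def)
  then obtain c0 where c0: "upper_covers L t c0" using cover_below[OF fin _ tC] x0 by (auto simp: C_def)
  have c0M: "c0 \<in> M"
  proof -
    have "\<exists>!u. upper_covers L u c0"
    proof (rule ex1I[of _ t])
      show "upper_covers L t c0" by (rule c0)
      fix u assume u: "upper_covers L u c0"
      then have uC: "u \<in> carrier L" and "c0 \<sqsubset> u" by (auto simp: upper_covers_def)
      show "u = t"
      proof (rule ccontr)
        assume "u \<noteq> t"
        then have "u \<sqsubset> t" using top uC by (auto simp: lless_eq)
        then show False using c0 uC \<open>c0 \<sqsubset> u\<close> by (auto simp: upper_covers_def)
      qed
    qed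
    then show ?thesis using c0 by (auto simp: M_def meet_irreducible_def upper_covers_def)
  qed
  have Kmeet: "\<And>x y. x \<in> K \<Longrightarrow> y \<in> K \<Longrightarrow> x \<sqinter> y \<in> K"
  proof -
    fix x y assume xK: "x \<in> K" and yK: "y \<in> K"
    then have x: "x \<in> carrier L" and y: "y \<in> carrier L" by (auto simp: K_def C_def)
    show "x \<sqinter> y \<in> K"
    proof (rule ccontr)
      assume "x \<sqinter> y \<notin> K"
      then have mi: "meet_irreducible L (x \<sqinter> y)" using x y by (auto simp: K_def C_def M_def)
      have "x \<sqinter> y \<noteq> x" using mi xK by (auto simp: K_def M_def)
      then have 1: "x \<sqinter> y \<sqsubset> x" using meet_left x y by (auto simp: lless_eq)
      have "x \<sqinter> y \<noteq> y" using mi yK by (auto simp: K_def M_def)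
      then have 2: "x \<sqinter> y \<sqsubset> y" using meet_right x y by (auto simp: lless_eq)
      have "x \<sqinter> y \<sqsubset> x \<sqinter> y" using mi_meet[OF fin mi x y 1 2] .
      then show False by (auto simp: lless_eq)
    qed
  qed
  show False
  proof (cases "card K \<le> 1")
    case True
    then have Kt: "K = {t}" using tK finK by (metis card_le_Suc0_iff_eq singletonI subsetI subset_antisym singletonD One_nat_def)
    have upt: "up_set L t = {t}" using top tC by (auto simp: up_set_def intro: le_antisym)
    have "join_irreducible L t"
      unfolding join_irreducible_def
    proof (intro conjI tC ex1I[of _ c0])
      show "upper_covers L t c0" by (rule c0)
      fix c assume c: "upper_covers L t c"
      show "c = c0"
      proof (rule ccontr)
        assume ne: "c \<noteq> c0"
        have cC: "c \<in> carrier L" and c0C: "c0 \<in> carrier L" using c c0 by (auto simp: upper_covers_def)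
        let ?d = "c \<sqinter> c0"
        have dC: "?d \<in> carrier L" using cC c0C by auto
        have "?d \<sqsubseteq> c" using meet_left cC c0C by auto
        have "?d \<noteq> t"
        proof
          assume "?d = t"
          then have "t \<sqsubseteq> c" using \<open>?d \<sqsubseteq> c\<close> by simp
          then show False using c cC tC by (auto simp: upper_covers_def lless_eq intro: le_antisym)
        qed
        then have dM: "meet_irreducible L ?d" using Kt dC by (auto simp: K_def C_def M_def)
        have "?d \<noteq> c"
        proof
          assume "?d = c"
          then have "c \<sqsubseteq> c0" using meet_right cC c0C by metis
          then have "c \<sqsubset> c0" using ne by (auto simp: lless_eq)
          then show False using c c0 c0C by (auto simp: upper_covers_def)
        qed
        then have 1: "?d \<sqsubset> c" using \<open>?d \<sqsubseteq> c\<close> by (auto simp: lless_eq)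
        have "?d \<noteq> c0"
        proof
          assume "?d = c0"
          then have "c0 \<sqsubseteq> c" using meet_left cC c0C by metis
          then have "c0 \<sqsubset> c" using ne by (auto simp: lless_eq)
          then show False using c c0 cC by (auto simp: upper_covers_def)
        qed
        then have 2: "?d \<sqsubset> c0" using meet_right cC c0C by (auto simp: lless_eq)
        have "?d \<sqsubset> ?d" using mi_meet[OF fin dM cC c0C 1 2] .
        then show False by (auto simp: lless_eq)
      qed
    qed
    from big[OF this] upt c1 show False by simp
  next
    case False
    then have cK: "card K > 1" by simp
    define Lk :: "'a gorder" where "Lk = \<lparr>carrier = K, eq = (=), le = gorder.le L\<rparr>"
    have [simp]: "carrier Lk = K" "eq Lk = (=)" "\<And>x y. x \<sqsubseteq>\<^bsub>Lk\<^esub> y \<longleftrightarrow> x \<sqsubseteq> y"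
      by (auto simp: Lk_def)
    have lessk[simp]: "\<And>x y. x \<sqsubset>\<^bsub>Lk\<^esub> y \<longleftrightarrow> x \<sqsubset> y"
      by (auto simp: lless_def eq_is_equal)
    have KC: "K \<subseteq> carrier L" by (auto simp: K_def C_def)
    have latK: "lattice Lk"
    proof (rule latticeI')
      fix x y assume xy: "x \<in> carrier Lk" "y \<in> carrier Lk"
      then have x: "x \<in> carrier L" and y: "y \<in> carrier L" using KC by auto
      show "\<exists>s\<in>carrier Lk. s \<sqsubseteq>\<^bsub>Lk\<^esub> x \<and> s \<sqsubseteq>\<^bsub>Lk\<^esub> y \<and> (\<forall>u\<in>carrier Lk. u \<sqsubseteq>\<^bsub>Lk\<^esub> x \<longrightarrow> u \<sqsubseteq>\<^bsub>Lk\<^esub> y \<longrightarrow> u \<sqsubseteq>\<^bsub>Lk\<^esub> s)"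
      proof (intro bexI[of _ "x \<sqinter> y"] conjI)
        show "x \<sqinter> y \<in> carrier Lk" using Kmeet xy by simp
        show "x \<sqinter> y \<sqsubseteq>\<^bsub>Lk\<^esub> x" using meet_left[OF x y] by simp
        show "x \<sqinter> y \<sqsubseteq>\<^bsub>Lk\<^esub> y" using meet_right[OF x y] by simp
        show "\<forall>u\<in>carrier Lk. u \<sqsubseteq>\<^bsub>Lk\<^esub> x \<longrightarrow> u \<sqsubseteq>\<^bsub>Lk\<^esub> y \<longrightarrow> u \<sqsubseteq>\<^bsub>Lk\<^esub> x \<sqinter> y"
        proof (intro ballI impI)
          fix u assume "u \<in> carrier Lk" "u \<sqsubseteq>\<^bsub>Lk\<^esub> x" "u \<sqsubseteq>\<^bsub>Lk\<^esub> y"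
          then show "u \<sqsubseteq>\<^bsub>Lk\<^esub> x \<sqinter> y" using meet_le[of u x y] x y KC by auto
        qed
      qed
      let ?U = "{u \<in> K. x \<sqsubseteq> u \<and> y \<sqsubseteq> u}"
      have "t \<in> ?U" using tK top x y by auto
      then have Une: "?U \<noteq> {}" by blast
      have Usub: "?U \<subseteq> carrier L" using KC by blast
      have Ufin: "finite ?U" using finK by simp
      obtain s where s: "s \<in> ?U" "\<forall>w\<in>?U. \<not> w \<sqsubset> s"
        using finite_minimal[OF Ufin Usub Une] by blast
      have sC: "s \<in> carrier L" using s KC by auto
      have sl: "\<forall>u\<in>K. x \<sqsubseteq> u \<longrightarrow> y \<sqsubseteq> u \<longrightarrow> s \<sqsubseteq> u"
      proof (intro ballI impI)
        fix u assume u: "u \<in> K" "x \<sqsubseteq> u" "y \<sqsubseteq> u"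
        then have uC: "u \<in> carrier L" using KC by auto
        have "s \<sqinter> u \<in> K" using Kmeet s u by auto
        moreover have "x \<sqsubseteq> s \<sqinter> u" using meet_le[of x s u] s u sC uC x by auto
        moreover have "y \<sqsubseteq> s \<sqinter> u" using meet_le[of y s u] s u sC uC y by auto
        ultimately have "s \<sqinter> u \<in> ?U" by auto
        moreover have "s \<sqinter> u \<sqsubseteq> s" using meet_left sC uC by auto
        ultimately have "s \<sqinter> u = s" using s by (auto simp: lless_eq)
        then show "s \<sqsubseteq> u" using meet_right sC uC by metis
      qed
      show "\<exists>s\<in>carrier Lk. x \<sqsubseteq>\<^bsub>Lk\<^esub> s \<and> y \<sqsubseteq>\<^bsub>Lk\<^esub> s \<and> (\<forall>u\<in>carrier Lk. x \<sqsubseteq>\<^bsub>Lk\<^esub> u \<longrightarrow> y \<sqsubseteq>\<^bsub>Lk\<^esub> u \<longrightarrow> s \<sqsubseteq>\<^bsub>Lk\<^esub> u)"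
        using s sl by (intro bexI[of _ s]) simp_all
    next
      fix x y assume "x \<in> carrier Lk" "y \<in> carrier Lk" "x \<sqsubseteq>\<^bsub>Lk\<^esub> y" "y \<sqsubseteq>\<^bsub>Lk\<^esub> x"
      then show "x = y" using KC le_antisym[of x y] by auto
    next
      fix x y z assume "x \<in> carrier Lk" "y \<in> carrier Lk" "z \<in> carrier Lk" "x \<sqsubseteq>\<^bsub>Lk\<^esub> y" "y \<sqsubseteq>\<^bsub>Lk\<^esub> z"
      then show "x \<sqsubseteq>\<^bsub>Lk\<^esub> z" using KC le_trans[of x y z] by auto
    next
      fix x assume "x \<in> carrier Lk"
      then show "x \<sqsubseteq>\<^bsub>Lk\<^esub> x" using KC by auto
    qed simp
    have poK: "partial_order Lk" using latK by (simp add: lattice_def upper_semilattice_def)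
    have cardK: "card K = card C - card M" using MC finM by (simp add: K_def card_Diff_subset)
    have cardM: "card M \<le> card C" using MC fin by (simp add: C_def card_mono)
    have ceK: "counterexample Lk"
      unfolding counterexample_def
    proof (intro conjI latK allI impI)
      show "finite (carrier Lk)" using finK by simp
      show "1 < card (carrier Lk)" using cK by simp
      fix a assume ja: "join_irreducible Lk a"
      then have aK: "a \<in> K" by (auto simp: join_irreducible_def)
      then have aC: "a \<in> carrier L" using KC by auto
      from ja obtain c where c: "upper_covers Lk a c" and cu: "\<And>c'. upper_covers Lk a c' \<Longrightarrow> c' = c"
        by (auto simp: join_irreducible_def)
      have cK: "c \<in> K" and ca: "c \<sqsubset> a" using c by (auto simp: upper_covers_def)
      have cC: "c \<in> carrier L" using cK KC by auto
      have star: "\<And>b. b \<in> K \<Longrightarrow> b \<sqsubset> a \<Longrightarrow> b \<sqsubseteq> c"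
      proof -
        fix b assume b: "b \<in> K" "b \<sqsubset> a"
        obtain z where z: "upper_covers Lk a z" "b \<sqsubseteq>\<^bsub>Lk\<^esub> z"
          using partial_order.cover_below[OF poK _ _ _, of b a] finK b aK by auto
        then show "b \<sqsubseteq> c" using cu by auto
      qed
      let ?Y = "{y \<in> C. y \<sqsubseteq> a \<and> \<not> y \<sqsubseteq> c}"
      have "a \<in> ?Y" using aC ca cC by (auto simp: C_def lless_eq intro: le_antisym)
      then obtain j where j: "j \<in> ?Y" "\<forall>w\<in>?Y. \<not> w \<sqsubset> j"
        using finite_minimal[of ?Y] fin by (metis (no_types, lifting) C_def empty_iff finite_subset mem_Collect_eq subsetI)
      have jC: "j \<in> carrier L" and ja': "j \<sqsubseteq> a" and jc: "\<not> j \<sqsubseteq> c" using j by (auto simp: C_def)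
      have jJ: "join_irreducible L j"
      proof -
        have "c \<sqinter> j \<sqsubseteq> j" using meet_right cC jC by auto
        moreover have "c \<sqinter> j \<noteq> j" using jc meet_left cC jC by metis
        ultimately have "c \<sqinter> j \<sqsubset> j" by (auto simp: lless_eq)
        then obtain z0 where z0: "upper_covers L j z0" using cover_below[OF fin _ jC, of "c \<sqinter> j"] cC jC by auto
        have lowc: "\<And>z. upper_covers L j z \<Longrightarrow> z \<sqsubseteq> c \<and> z \<in> carrier L \<and> z \<sqsubset> j"
        proof -
          fix z assume z: "upper_covers L j z"
          then have zC: "z \<in> carrier L" and zj: "z \<sqsubset> j" by (auto simp: upper_covers_def)
          have "z \<sqsubseteq> a" using le_trans[of z j a] zC jC aC zj ja' by (auto simp: lless_eq)
          then have "z \<sqsubseteq> c" using j zC zj by (auto simp: C_def)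
          then show "z \<sqsubseteq> c \<and> z \<in> carrier L \<and> z \<sqsubset> j" using zC zj by auto
        qed
        have "\<exists>!z. upper_covers L j z"
        proof (rule ex1I[of _ z0])
          show "upper_covers L j z0" by (rule z0)
          fix z assume z: "upper_covers L j z"
          have A: "z \<sqsubseteq> c" "z \<in> carrier L" "z \<sqsubset> j" using lowc[OF z] by auto
          have B: "z0 \<sqsubseteq> c" "z0 \<in> carrier L" "z0 \<sqsubset> j" using lowc[OF z0] by auto
          have sj: "z \<squnion> z0 \<sqsubseteq> j" using join_le A B jC by (auto simp: lless_eq)
          have sc: "z \<squnion> z0 \<sqsubseteq> c" using join_le A B cC by auto
          have sC: "z \<squnion> z0 \<in> carrier L" using A B by auto
          have "z \<squnion> z0 \<noteq> j" using sc jc by auto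
          then have sjl: "z \<squnion> z0 \<sqsubset> j" using sj by (auto simp: lless_eq)
          have "z \<sqsubseteq> z \<squnion> z0" "z0 \<sqsubseteq> z \<squnion> z0" using join_left join_right A B by auto
          then have "z \<squnion> z0 = z" "z \<squnion> z0 = z0"
            using z z0 sjl sC by (auto simp: upper_covers_def lless_eq)
          then show "z = z0" by simp
        qed
        then show ?thesis using jC by (simp add: join_irreducible_def)
      qed
      have upeq: "up_set Lk a = up_set L j - M"
      proof
        show "up_set Lk a \<subseteq> up_set L j - M"
          using le_trans[of j a] jC aC ja' KC by (auto simp: up_set_def K_def)
        show "up_set L j - M \<subseteq> up_set Lk a"
        proof
          fix x assume x: "x \<in> up_set L j - M"
          then have xC: "x \<in> carrier L" and jx: "j \<sqsubseteq> x" and xK: "x \<in> K"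
            by (auto simp: up_set_def K_def C_def)
          have wK: "x \<sqinter> a \<in> K" using Kmeet xK aK by auto
          have jw: "j \<sqsubseteq> x \<sqinter> a" using meet_le jx ja' jC xC aC by auto
          have wa: "x \<sqinter> a \<sqsubseteq> a" using meet_right xC aC by auto
          have "x \<sqinter> a = a"
          proof (rule ccontr)
            assume "x \<sqinter> a \<noteq> a"
            then have "x \<sqinter> a \<sqsubset> a" using wa by (auto simp: lless_eq)
            then have "x \<sqinter> a \<sqsubseteq> c" using star wK by auto
            then have "j \<sqsubseteq> c" using le_trans[of j "x \<sqinter> a" c] jw jC xC aC cC by auto
            then show False using jc by simp
          qed
          then have "a \<sqsubseteq> x" using meet_left xC aC by metis
          then show "x \<in> up_set Lk a" using xK by (auto simp: up_set_def)
        qed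
      qed
      have finU: "finite (up_set L j)" using fin by (auto simp: up_set_def)
      have IM: "up_set L j \<inter> M = {m. meet_irreducible L m \<and> j \<sqsubseteq> m}"
        by (auto simp: up_set_def M_def meet_irreducible_def)
      have c2: "card (up_set L j - M) = card (up_set L j) - card (up_set L j \<inter> M)"
        by (rule card_Diff_subset_Int) (use finU in auto)
      have c3: "card (up_set L j \<inter> M) \<le> card (up_set L j)" using finU by (simp add: card_mono)
      have b1: "real (card (up_set L j)) > real (card C) / 2" using big[OF jJ] by (simp add: C_def)
      have b2: "real (card (up_set L j \<inter> M)) \<le> real (card M) / 2" using neg[OF jJ] IM by (simp add: M_def)
      show "real (card (carrier Lk)) / 2 < real (card (up_set Lk a))"
        using upeq c2 c3 b1 b2 cardK cardM by (simp add: of_nat_diff)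
    qed
    obtain B :: "nat gorder" where B: "counterexample B" "card (carrier B) = card (carrier Lk)"
      using transport_nat[OF ceK] by blast
    have "card M > 0" using c0M finM by (auto simp: card_gt_0_iff)
    then have "card K < card C" using cardK cK by arith
    then show False using nosmall B by (auto simp: C_def)
  qed
qed

theorem corollary2p10:
  fixes L :: "'a gorder"
  assumes "min_counterexample L"
  shows "\<exists>j. join_irreducible L j \<and>
    real (card {m. meet_irreducible L m \<and> j \<sqsubseteq>\<^bsub>L\<^esub> m})
      > real (card {m. meet_irreducible L m}) / 2"
  using lattice.main[of L] assms by (auto simp: min_counterexample_def counterexample_def)

end
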